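(* Let $B\ge 1$ be an integer, $\mathcal{E}>0$, $\epsilon>0$. Let $X=\{\mathbf{i}=(i_0,\dots,i_{B-1})\in\mathbb{R}^B: i_b\ge 1+\epsilon\ \forall b\}$, $Y=\{\mathbf{t}=(t_0,\dots,t_{B-1})\in\mathbb{R}^B: t_b\ge 0\ \forall b\}$, and $S=\{(\mathbf{i},\mathbf{t})\in X\times Y: \sum_{b=0}^{B-1} i_b^2t_b\le\mathcal{E}\}$. Then the optimization problem $$\text{minimize } f(\mathbf{i},\mathbf{t})=\sum_{b=0}^{B-1}4^b\exp\bigl(-2(i_b-1)t_b\bigr)\quad\text{subject to } (\mathbf{i},\mathbf{t})\in S$$ is a biconvex problem: $S$ is a biconvex set on $X\times Y$ and $f$ is a biconvex function on $S$.
   Context: Let $X\subseteq\mathbb{R}^n$, $Y\subseteq\mathbb{R}^m$ be nonempty convex sets. A set $S\subseteq X\times Y$ is biconvex on $X\times Y$ if for every fixed $\mathbf{x}\in X$ the set $S_{\mathbf{x}}=\{\mathbf{y}\in Y:(\mathbf{x},\mathbf{y})\in S\}$ is convex, and for every fixed $\mathbf{y}\in Y$ the set $S_{\mathbf{y}}=\{\mathbf{x}\in X:(\mathbf{x},\mathbf{y})\in S\}$ is convex. A function $f:S\to\mathbb{R}$ is biconvex on $S$ if for every fixed $\mathbf{x}\in X$, $f(\mathbf{x},\cdot)$ is convex on $S_{\mathbf{x}}$, and for every fixed $\mathbf{y}\in Y$, $f(\cdot,\mathbf{y})$ is convex on $S_{\mathbf{y}}$. A problem of minimizing $f$ over $S$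 is biconvex if $S$ is biconvex on $X\times Y$ and $f$ is biconvex on $S$. *)

theory Defs
  imports "HOL-Analysis.Analysis"
begin

text \<open>Vectors in R^B are represented as functions nat => real that vanish at indices >= B.
  Convexity is stated with pointwise convex combinations.\<close>

definition cvx_set :: "(nat \<Rightarrow> real) set \<Rightarrow> bool" where
  "cvx_set A \<longleftrightarrow> (\<forall>x\<in>A. \<forall>y\<in>A. \<forall>u::real. 0 \<le> u \<and> u \<le> 1 \<longrightarrow>
      (\<lambda>b. u * x b + (1 - u) * y b) \<in> A)"

definition cvx_fun :: "(nat \<Rightarrow> real) set \<Rightarrow> ((nat \<Rightarrow> real) \<Rightarrow> real) \<Rightarrow> bool" where
  "cvx_fun A g \<longleftrightarrow> (\<forall>x\<in>A. \<forall>y\<in>A. \<forall>u::real. 0 \<le> u \<and> u \<le> 1 \<longrightarrow>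
      g (\<lambda>b. u * x b + (1 - u) * y b) \<le> u * g x + (1 - u) * g y)"

definition biconvex_set ::
  "(nat \<Rightarrow> real) set \<Rightarrow> (nat \<Rightarrow> real) set \<Rightarrow> ((nat \<Rightarrow> real) \<times> (nat \<Rightarrow> real)) set \<Rightarrow> bool" where
  "biconvex_set X Y S \<longleftrightarrow> X \<noteq> {} \<and> Y \<noteq> {} \<and> cvx_set X \<and> cvx_set Y \<and> S \<subseteq> X \<times> Y \<and>
     (\<forall>x\<in>X. cvx_set {y\<in>Y. (x, y) \<in> S}) \<and> (\<forall>y\<in>Y. cvx_set {x\<in>X. (x, y) \<in> S})"

definition biconvex_fun ::
  "(nat \<Rightarrow> real) set \<Rightarrow> (nat \<Rightarrow> real) set \<Rightarrow> ((nat \<Rightarrow> real) \<times> (nat \<Rightarrow> real)) set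
     \<Rightarrow> ((nat \<Rightarrow> real) \<times> (nat \<Rightarrow> real) \<Rightarrow> real) \<Rightarrow> bool" where
  "biconvex_fun X Y S f \<longleftrightarrow>
     (\<forall>x\<in>X. cvx_fun {y\<in>Y. (x, y) \<in> S} (\<lambda>y. f (x, y))) \<and>
     (\<forall>y\<in>Y. cvx_fun {x\<in>X. (x, y) \<in> S} (\<lambda>x. f (x, y)))"

end

theory Submission
  imports Defs
begin

lemma exp_cvx:
  fixes p q u :: real
  assumes "0 \<le> u" "u \<le> 1"
  shows "exp (u * p + (1 - u) * q) \<le> u * exp p + (1 - u) * exp q"
proof -
  have "exp ((1 - (1-u)) *\<^sub>R p + (1-u) *\<^sub>R q) \<le> (1 - (1-u)) * exp p + (1-u) * exp q"
    using assms by (intro convex_onD[OF exp_convex]) auto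
  then show ?thesis by simp
qed

lemma sq_cvx:
  fixes a c u :: real
  assumes "0 \<le> u" "u \<le> 1"
  shows "(u * a + (1 - u) * c)\<^sup>2 \<le> u * a\<^sup>2 + (1 - u) * c\<^sup>2"
proof -
  have "u * a\<^sup>2 + (1 - u) * c\<^sup>2 - (u * a + (1 - u) * c)\<^sup>2 = u * (1 - u) * (a - c)\<^sup>2"
    by (simp add: power2_eq_square algebra_simps)
  moreover have "u * (1 - u) * (a - c)\<^sup>2 \<ge> 0" using assms by simp
  ultimately show ?thesis by linarith
qed

lemma comb_ge:
  fixes a c u m :: real
  assumes "0 \<le> u" "u \<le> 1" "a \<ge> m" "c \<ge> m"
  shows "u * a + (1 - u) * c \<ge> m"
proof -
  have "u * a \<ge> u * m" "(1-u) * c \<ge> (1-u) * m" using assms by (auto intro: mult_left_mono)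
  then show ?thesis by (simp add: algebra_simps)
qed

lemma lin_sum:
  fixes g h :: "nat \<Rightarrow> real"
  shows "(\<Sum>b<B. u * g b + (1-u) * h b) = u * (\<Sum>b<B. g b) + (1-u) * (\<Sum>b<B. h b)"
  by (simp add: sum.distrib sum_distrib_left)

theorem theorem1:
  fixes B :: nat and E \<epsilon> :: real
    and X Y :: "(nat \<Rightarrow> real) set"
    and S :: "((nat \<Rightarrow> real) \<times> (nat \<Rightarrow> real)) set"
    and f :: "(nat \<Rightarrow> real) \<times> (nat \<Rightarrow> real) \<Rightarrow> real"
  assumes "B \<ge> 1" and "E > 0" and "\<epsilon> > 0"
    and X: "X = {i. (\<forall>b<B. i b \<ge> 1 + \<epsilon>) \<and> (\<forall>b\<ge>B. i b = 0)}"
    and Y: "Y = {t. (\<forall>b<B. t b \<ge> 0) \<and> (\<forall>b\<ge>B. t b = 0)}"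
    and S: "S = {(i, t). i \<in> X \<and> t \<in> Y \<and> (\<Sum>b<B. (i b)\<^sup>2 * t b) \<le> E}"
    and f: "f = (\<lambda>(i, t). \<Sum>b<B. 4 ^ b * exp (- 2 * (i b - 1) * t b))"
  shows "biconvex_set X Y S \<and> biconvex_fun X Y S f"
proof -
  have Xne: "(\<lambda>b. if b < B then 1 + \<epsilon> else 0) \<in> X" using X by auto
  have Yne: "(\<lambda>b. 0) \<in> Y" using Y by auto
  have cX: "cvx_set X" unfolding cvx_set_def X using comb_ge by auto
  have cY: "cvx_set Y" unfolding cvx_set_def Y using comb_ge by auto
  have sec1: "cvx_set {y\<in>Y. (x, y) \<in> S}" if "x \<in> X" for x
    unfolding cvx_set_def
  proof (intro ballI allI impI)
    fix y1 y2 :: "nat \<Rightarrow> real" and u :: real assume y1: "y1 \<in> {y\<in>Y. (x, y) \<in> S}" and y2: "y2 \<in> {y\<in>Y. (x, y) \<in> S}"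
      and u: "0 \<le> u \<and> u \<le> 1"
    have inY: "(\<lambda>b. u * y1 b + (1 - u) * y2 b) \<in> Y" using cX cY y1 y2 u unfolding cvx_set_def by auto
    have e1: "(\<Sum>b<B. (x b)\<^sup>2 * y1 b) \<le> E" and e2: "(\<Sum>b<B. (x b)\<^sup>2 * y2 b) \<le> E"
      using y1 y2 S by auto
    have "(\<Sum>b<B. (x b)\<^sup>2 * (u * y1 b + (1 - u) * y2 b)) =
        u * (\<Sum>b<B. (x b)\<^sup>2 * y1 b) + (1-u) * (\<Sum>b<B. (x b)\<^sup>2 * y2 b)"
      by (subst lin_sum[symmetric], rule sum.cong) (auto simp: algebra_simps)
    also have "\<dots> \<le> u * E + (1-u) * E"
      using e1 e2 u by (intro add_mono mult_left_mono) auto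
    finally have "(\<Sum>b<B. (x b)\<^sup>2 * (u * y1 b + (1 - u) * y2 b)) \<le> E" by (simp add: algebra_simps)
    then show "(\<lambda>b. u * y1 b + (1 - u) * y2 b) \<in> {y\<in>Y. (x, y) \<in> S}"
      using inY that S by auto
  qed
  have sec2: "cvx_set {x\<in>X. (x, y) \<in> S}" if "y \<in> Y" for y
    unfolding cvx_set_def
  proof (intro ballI allI impI)
    fix x1 x2 :: "nat \<Rightarrow> real" and u :: real assume x1: "x1 \<in> {x\<in>X. (x, y) \<in> S}" and x2: "x2 \<in> {x\<in>X. (x, y) \<in> S}"
      and u: "0 \<le> u \<and> u \<le> 1"
    have inX: "(\<lambda>b. u * x1 b + (1 - u) * x2 b) \<in> X" using cX x1 x2 u unfolding cvx_set_def by auto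
    have e1: "(\<Sum>b<B. (x1 b)\<^sup>2 * y b) \<le> E" and e2: "(\<Sum>b<B. (x2 b)\<^sup>2 * y b) \<le> E"
      using x1 x2 S by auto
    have yp: "\<And>b. b < B \<Longrightarrow> y b \<ge> 0" using that Y by auto
    have "(\<Sum>b<B. (u * x1 b + (1 - u) * x2 b)\<^sup>2 * y b) \<le>
        (\<Sum>b<B. (u * (x1 b)\<^sup>2 + (1 - u) * (x2 b)\<^sup>2) * y b)"
      using u yp sq_cvx by (intro sum_mono mult_right_mono) auto
    also have "\<dots> = u * (\<Sum>b<B. (x1 b)\<^sup>2 * y b) + (1-u) * (\<Sum>b<B. (x2 b)\<^sup>2 * y b)"
      by (subst lin_sum[symmetric], rule sum.cong) (auto simp: algebra_simps)
    also have "\<dots> \<le> u * E + (1-u) * E"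
      using e1 e2 u by (intro add_mono mult_left_mono) auto
    finally have "(\<Sum>b<B. (u * x1 b + (1 - u) * x2 b)\<^sup>2 * y b) \<le> E" by (simp add: algebra_simps)
    then show "(\<lambda>b. u * x1 b + (1 - u) * x2 b) \<in> {x\<in>X. (x, y) \<in> S}"
      using inX that S by auto
  qed
  have fun1: "cvx_fun {y\<in>Y. (x, y) \<in> S} (\<lambda>y. f (x, y))" for x
    unfolding cvx_fun_def
  proof (intro ballI allI impI)
    fix y1 y2 :: "nat \<Rightarrow> real" and u :: real assume u: "0 \<le> u \<and> u \<le> 1"
    have "(\<Sum>b<B. 4 ^ b * exp (- 2 * (x b - 1) * (u * y1 b + (1 - u) * y2 b))) \<le>
        (\<Sum>b<B. 4 ^ b * (u * exp (- 2 * (x b - 1) * y1 b) + (1-u) * exp (- 2 * (x b - 1) * y2 b)))"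
    proof (intro sum_mono mult_left_mono)
      fix b
      have "- 2 * (x b - 1) * (u * y1 b + (1 - u) * y2 b) =
          u * (- 2 * (x b - 1) * y1 b) + (1-u) * (- 2 * (x b - 1) * y2 b)" by (simp add: algebra_simps)
      then show "exp (- 2 * (x b - 1) * (u * y1 b + (1 - u) * y2 b)) \<le>
          u * exp (- 2 * (x b - 1) * y1 b) + (1-u) * exp (- 2 * (x b - 1) * y2 b)"
        using exp_cvx u by simp
    qed auto
    also have "\<dots> = u * (\<Sum>b<B. 4 ^ b * exp (- 2 * (x b - 1) * y1 b)) +
        (1-u) * (\<Sum>b<B. 4 ^ b * exp (- 2 * (x b - 1) * y2 b))"
      by (subst lin_sum[symmetric], rule sum.cong) (auto simp: algebra_simps)
    finally show "f (x, \<lambda>b. u * y1 b + (1 - u) * y2 b) \<le> u * f (x, y1) + (1 - u) * f (x, y2)"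
      using f by simp
  qed
  have fun2: "cvx_fun {x\<in>X. (x, y) \<in> S} (\<lambda>x. f (x, y))" for y
    unfolding cvx_fun_def
  proof (intro ballI allI impI)
    fix x1 x2 :: "nat \<Rightarrow> real" and u :: real assume u: "0 \<le> u \<and> u \<le> 1"
    have "(\<Sum>b<B. 4 ^ b * exp (- 2 * ((u * x1 b + (1 - u) * x2 b) - 1) * y b)) \<le>
        (\<Sum>b<B. 4 ^ b * (u * exp (- 2 * (x1 b - 1) * y b) + (1-u) * exp (- 2 * (x2 b - 1) * y b)))"
    proof (intro sum_mono mult_left_mono)
      fix b
      have "- 2 * ((u * x1 b + (1 - u) * x2 b) - 1) * y b =
          u * (- 2 * (x1 b - 1) * y b) + (1-u) * (- 2 * (x2 b - 1) * y b)" by (simp add: algebra_simps)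
      then show "exp (- 2 * ((u * x1 b + (1 - u) * x2 b) - 1) * y b) \<le>
          u * exp (- 2 * (x1 b - 1) * y b) + (1-u) * exp (- 2 * (x2 b - 1) * y b)"
        using exp_cvx u by simp
    qed auto
    also have "\<dots> = u * (\<Sum>b<B. 4 ^ b * exp (- 2 * (x1 b - 1) * y b)) +
        (1-u) * (\<Sum>b<B. 4 ^ b * exp (- 2 * (x2 b - 1) * y b))"
      by (subst lin_sum[symmetric], rule sum.cong) (auto simp: algebra_simps)
    finally show "f (\<lambda>b. u * x1 b + (1 - u) * x2 b, y) \<le> u * f (x1, y) + (1 - u) * f (x2, y)"
      using f by simp
  qed
  have "S \<subseteq> X \<times> Y" using S by auto
  then show ?thesis
    unfolding biconvex_set_def biconvex_fun_def
    using Xne Yne cX cY sec1 sec2 fun1 fun2 by blast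
qed

end
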